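(* Let $n\geqslant2$, $\lambda>0$, distinct points $p_1,\ldots,p_M\in\mathbb{Z}^n$ and positive integers $n_1,\ldots,n_M$ be given, let $g=4\pi\sum_{j=1}^Mn_j\delta_{p_j}$ and $C=4\pi\sum_{j=1}^Mn_j$. Let $\Omega_0\subset\mathbb{Z}^n$ be a finite set containing $\{p_j\}_{j=1}^M$ and let $\Omega$ be a finite connected subset with $\Omega_0\subset\Omega$. Fix $K>2\lambda$, let $u_0=0$ and for $k\geqslant1$ let $u_k:\overline\Omega\to\mathbb{R}$ be the (unique) solution of $$(\Delta-K)u_k=\lambda e^{u_{k-1}}(e^{u_{k-1}}-1)+g-Ku_{k-1}\ \text{ on }\Omega,\qquad u_k=0\ \text{ on }\delta\Omega.$$ Define, for $u:\overline\Omega\to\mathbb{R}$, $$F(u)=\frac12D_\Omega(u)+\sum_{x\in\Omega}\Big[\frac\lambda2(e^{u(x)}-1)^2+g(x)u(x)\Big].$$ Then $c_0\geqslant F(u_1)\geqslant F(u_2)\geqslant\cdots\geqslant F(u_k)\geqslant\cdots$, where the constant $c_0$ depends only on $n$, $C$ and $\lambda$.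
   Context: $\mathbb{Z}^n$ is the integer lattice graph with $x\sim y$ iff $\sum_i|x_i-y_i|=1$. For a finite $\Omega\subset\mathbb{Z}^n$, $\delta\Omega=\{y\in\mathbb{Z}^n\setminus\Omega:\exists x\in\Omega,\ y\sim x\}$ and $\overline\Omega=\Omega\cup\delta\Omega$. For $u:\overline\Omega\to\mathbb{R}$ and $x\in\Omega$, $\Delta u(x)=\sum_{y\sim x}(u(y)-u(x))$. $\delta_p$ is the function equal to $1$ at $p$ and $0$ elsewhere. With $\nabla_{xy}f=f(y)-f(x)$, the Dirichlet energy on $\Omega$ is $D_\Omega(f)=\frac12\sum_{x,y\in\Omega,\,x\sim y}(\nabla_{xy}f)^2+\sum_{x\in\Omega,\,y\in\delta\Omega,\,x\sim y}(\nabla_{xy}f)^2$. *)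

theory Defs
  imports Complex_Main
begin

text \<open>Points of the lattice Z^n are integer lists of length n.\<close>

definition lat_adj :: "int list \<Rightarrow> int list \<Rightarrow> bool" where
  "lat_adj x y \<longleftrightarrow> length x = length y \<and> (\<Sum>i<length x. \<bar>x ! i - y ! i\<bar>) = 1"

definition lat_bdry :: "int list set \<Rightarrow> int list set" where
  "lat_bdry \<Omega> = {y. y \<notin> \<Omega> \<and> (\<exists>x\<in>\<Omega>. lat_adj y x)}"

definition lat_closure :: "int list set \<Rightarrow> int list set" where
  "lat_closure \<Omega> = \<Omega> \<union> lat_bdry \<Omega>"

definition lat_laplacian :: "(int list \<Rightarrow> real) \<Rightarrow> int list \<Rightarrow> real" where
  "lat_laplacian u x = (\<Sum>y\<in>{y. lat_adj x y}. u y - u x)"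

definition lat_connected :: "int list set \<Rightarrow> bool" where
  "lat_connected \<Omega> \<longleftrightarrow>
     (\<forall>x\<in>\<Omega>. \<forall>y\<in>\<Omega>. (\<lambda>a b. a \<in> \<Omega> \<and> b \<in> \<Omega> \<and> lat_adj a b)\<^sup>*\<^sup>* x y)"

definition dirichlet_energy :: "int list set \<Rightarrow> (int list \<Rightarrow> real) \<Rightarrow> real" where
  "dirichlet_energy \<Omega> f =
     (1/2) * (\<Sum>(x,y)\<in>{(x,y). x \<in> \<Omega> \<and> y \<in> \<Omega> \<and> lat_adj x y}. (f y - f x)^2)
     + (\<Sum>(x,y)\<in>{(x,y). x \<in> \<Omega> \<and> y \<in> lat_bdry \<Omega> \<and> lat_adj x y}. (f y - f x)^2)"

definition vortex_src :: "nat \<Rightarrow> (nat \<Rightarrow> int list) \<Rightarrow> (nat \<Rightarrow> nat) \<Rightarrow> int list \<Rightarrow> real" where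
  "vortex_src M p nn x = 4 * pi * (\<Sum>j<M. real (nn j) * (if x = p j then 1 else 0))"

definition energy_F ::
  "real \<Rightarrow> (int list \<Rightarrow> real) \<Rightarrow> int list set \<Rightarrow> (int list \<Rightarrow> real) \<Rightarrow> real" where
  "energy_F lam g \<Omega> u = (1/2) * dirichlet_energy \<Omega> u
     + (\<Sum>x\<in>\<Omega>. lam/2 * (exp (u x) - 1)^2 + g x * u x)"

end

theory Submission
  imports Defs
begin


lemma adj_sym: "lat_adj x y = lat_adj y x"
  unfolding lat_adj_def by (auto simp: abs_minus_commute)

lemma adj_finite: "finite {y. lat_adj x y}"
proof -
  define B where "B = (\<Sum>i<length x. \<bar>x!i\<bar>) + 1"
  have "{y. lat_adj x y} \<subseteq> {ys. set ys \<subseteq> {-B..B} \<and> length ys = length x}"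
  proof
    fix y assume "y \<in> {y. lat_adj x y}"
    then have l: "length y = length x" and s: "(\<Sum>i<length x. \<bar>x!i - y!i\<bar>) = 1"
      by (auto simp: lat_adj_def)
    have b: "\<bar>y!i\<bar> \<le> B" if "i < length x" for i
    proof -
      have "\<bar>x!i - y!i\<bar> \<le> 1" using member_le_sum[of i "{..<length x}" "\<lambda>i. \<bar>x!i - y!i\<bar>"] that unfolding s by simp
      moreover have "\<bar>x!i\<bar> \<le> (\<Sum>i<length x. \<bar>x!i\<bar>)"
        using member_le_sum[of i "{..<length x}" "\<lambda>i. \<bar>x!i\<bar>"] that by simp
      ultimately show ?thesis unfolding B_def by arith
    qed
    show "y \<in> {ys. set ys \<subseteq> {-B..B} \<and> length ys = length x}"
      using l b by (force simp: in_set_conv_nth abs_le_iff)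
  qed
  then show ?thesis by (rule finite_subset) (rule finite_lists_length_eq, simp)
qed

lemma phi_mono:
  assumes "s \<le> t" "t \<le> (0::real)"
  shows "exp t * (exp t - 1) - t \<le> exp s * (exp s - 1) - s"
proof (cases "s = t")
  case False
  then have st: "s < t" using assms by simp
  have d: "\<And>x. s \<le> x \<Longrightarrow> x \<le> t \<Longrightarrow> ((\<lambda>x. exp x * (exp x - 1) - x) has_real_derivative
      (exp x * (exp x - 1) + exp x * exp x - 1)) (at x)"
    by (auto intro!: derivative_eq_intros)
  obtain z where z: "s < z" "z < t" and eq: "exp t * (exp t - 1) - t - (exp s * (exp s - 1) - s)
      = (t - s) * (exp z * (exp z - 1) + exp z * exp z - 1)"
    using MVT2[OF st d] by auto
  have "exp z \<le> 1" using z assms by simp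
  moreover have "exp z > 0" by simp
  ultimately have "(2 * exp z + 1) * (exp z - 1) \<le> 0"
    by (intro mult_nonneg_nonpos) auto
  moreover have "exp z * (exp z - 1) + exp z * exp z - 1 = (2 * exp z + 1) * (exp z - 1)"
    by (simp add: algebra_simps)
  ultimately have "exp z * (exp z - 1) + exp z * exp z - 1 \<le> 0" by simp
  then have "(t - s) * (exp z * (exp z - 1) + exp z * exp z - 1) \<le> 0"
    using st by (simp add: mult_nonneg_nonpos)
  then show ?thesis using eq by simp
qed simp

lemma taylor_q:
  assumes "a \<le> 0" "b \<le> (0::real)"
  shows "(exp a - 1)^2/2 - (exp b - 1)^2/2 - exp b * (exp b - 1) * (a - b) \<le> (a - b)^2/2"
proof -
  define h where "h x = (exp x - 1)^2/2 - (exp b - 1)^2/2 - exp b * (exp b - 1) * (x - b) - (x - b)^2/2" for x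
  have d: "\<And>x. (h has_real_derivative
      ((exp x * (exp x - 1) - x) - (exp b * (exp b - 1) - b))) (at x)"
    unfolding h_def
    apply (rule derivative_eq_intros refl | simp)+
    apply (simp add: field_simps)
    done
  have "h a \<le> 0"
  proof (cases a b rule: linorder_cases)
    case less
    obtain z where z: "a < z" "z < b" and eq: "h b - h a = (b - a) * ((exp z * (exp z - 1) - z) - (exp b * (exp b - 1) - b))"
      using MVT2[OF less, of h "\<lambda>x. (exp x * (exp x - 1) - x) - (exp b * (exp b - 1) - b)"] d by blast
    have "(exp b * (exp b - 1) - b) \<le> (exp z * (exp z - 1) - z)" using phi_mono[of z b] z assms by simp
    then have "0 \<le> (b - a) * ((exp z * (exp z - 1) - z) - (exp b * (exp b - 1) - b))" using less by simp
    moreover have "h b = 0" unfolding h_def by simp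
    ultimately show ?thesis using eq by simp
  next
    case equal then show ?thesis unfolding h_def by simp
  next
    case greater
    obtain z where z: "b < z" "z < a" and eq: "h a - h b = (a - b) * ((exp z * (exp z - 1) - z) - (exp b * (exp b - 1) - b))"
      using MVT2[OF greater, of h "\<lambda>x. (exp x * (exp x - 1) - x) - (exp b * (exp b - 1) - b)"] d by blast
    have "(exp z * (exp z - 1) - z) \<le> (exp b * (exp b - 1) - b)" using phi_mono[of b z] z assms by simp
    then have "(a - b) * ((exp z * (exp z - 1) - z) - (exp b * (exp b - 1) - b)) \<le> 0" using greater
      by (simp add: mult_nonneg_nonpos)
    moreover have "h b = 0" unfolding h_def by simp
    ultimately show ?thesis using eq by simp
  qed
  then show ?thesis unfolding h_def by simp
qed

definition Eint :: "int list set \<Rightarrow> (int list \<times> int list) set" where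
  "Eint Om = {(x,y). x \<in> Om \<and> y \<in> Om \<and> lat_adj x y}"
definition Ebd :: "int list set \<Rightarrow> (int list \<times> int list) set" where
  "Ebd Om = {(x,y). x \<in> Om \<and> y \<in> lat_bdry Om \<and> lat_adj x y}"
definition Dbil :: "int list set \<Rightarrow> (int list \<Rightarrow> real) \<Rightarrow> (int list \<Rightarrow> real) \<Rightarrow> real" where
  "Dbil Om a w = (1/2) * (\<Sum>(x,y)\<in>Eint Om. (a y - a x) * (w y - w x))
     + (\<Sum>(x,y)\<in>Ebd Om. (a y - a x) * (w y - w x))"

lemma D_Dbil: "dirichlet_energy Om f = Dbil Om f f"
  unfolding dirichlet_energy_def Dbil_def Eint_def Ebd_def by (simp add: power2_eq_square)

lemma Dbil_nonneg: "Dbil Om w w \<ge> 0"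
  unfolding Dbil_def by (intro add_nonneg_nonneg mult_nonneg_nonneg sum_nonneg) (auto)

lemma Dbil_diff: "Dbil Om a a - Dbil Om b b = 2 * Dbil Om a (\<lambda>x. a x - b x) - Dbil Om (\<lambda>x. a x - b x) (\<lambda>x. a x - b x)"
proof -
  have e: "(\<Sum>(x,y)\<in>E. (a y - a x) * (a y - a x)) - (\<Sum>(x,y)\<in>E. (b y - b x) * (b y - b x))
     = 2 * (\<Sum>(x,y)\<in>E. (a y - a x) * ((a y - b y) - (a x - b x)))
       - (\<Sum>(x,y)\<in>E. ((a y - b y) - (a x - b x)) * ((a y - b y) - (a x - b x)))" for E
    by (simp add: sum_subtractf[symmetric] sum_distrib_left case_prod_unfold algebra_simps)
  show ?thesis unfolding Dbil_def using e[of "Eint Om"] e[of "Ebd Om"] by (simp add: algebra_simps)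
qed

lemma Eint_fin: "finite Om \<Longrightarrow> finite (Eint Om)"
  by (rule finite_subset[of _ "Om \<times> Om"]) (auto simp: Eint_def)

lemma sbp:
  assumes fin: "finite Om" and w0: "\<forall>y\<in>lat_bdry Om. w y = 0"
  shows "(\<Sum>x\<in>Om. w x * lat_laplacian a x) = - Dbil Om a w"
proof -
  let ?N = "\<lambda>x. {y. lat_adj x y}"
  have split: "?N x = (?N x \<inter> Om) \<union> (?N x \<inter> lat_bdry Om)" if "x \<in> Om" for x
    using that adj_sym by (auto simp: lat_bdry_def)
  have "(\<Sum>x\<in>Om. w x * lat_laplacian a x)
      = (\<Sum>x\<in>Om. (\<Sum>y\<in>?N x \<inter> Om. w x * (a y - a x)) + (\<Sum>y\<in>?N x \<inter> lat_bdry Om. w x * (a y - a x)))"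
  proof (rule sum.cong[OF refl])
    fix x assume x: "x \<in> Om"
    have "w x * lat_laplacian a x = (\<Sum>y\<in>?N x. w x * (a y - a x))"
      unfolding lat_laplacian_def by (simp add: sum_distrib_left)
    also have "\<dots> = (\<Sum>y\<in>(?N x \<inter> Om) \<union> (?N x \<inter> lat_bdry Om). w x * (a y - a x))"
      using split[OF x] by simp
    also have "\<dots> = (\<Sum>y\<in>?N x \<inter> Om. w x * (a y - a x)) + (\<Sum>y\<in>?N x \<inter> lat_bdry Om. w x * (a y - a x))"
      by (rule sum.union_disjoint) (auto simp: adj_finite lat_bdry_def)
    finally show "w x * lat_laplacian a x = \<dots>" .
  qed
  also have "\<dots> = (\<Sum>(x,y)\<in>Eint Om. w x * (a y - a x)) + (\<Sum>(x,y)\<in>Ebd Om. w x * (a y - a x))"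
  proof -
    have "Eint Om = Sigma Om (\<lambda>x. ?N x \<inter> Om)" by (auto simp: Eint_def)
    moreover have "Ebd Om = Sigma Om (\<lambda>x. ?N x \<inter> lat_bdry Om)" by (auto simp: Ebd_def)
    ultimately show ?thesis
      by (simp add: sum.distrib sum.Sigma fin adj_finite)
  qed
  also have "(\<Sum>(x,y)\<in>Ebd Om. w x * (a y - a x)) = - (\<Sum>(x,y)\<in>Ebd Om. (a y - a x) * (w y - w x))"
    by (subst sum_negf[symmetric], rule sum.cong) (auto simp: Ebd_def w0)
  also have "(\<Sum>(x,y)\<in>Eint Om. w x * (a y - a x)) = - (1/2) * (\<Sum>(x,y)\<in>Eint Om. (a y - a x) * (w y - w x))"
  proof -
    have sw: "prod.swap ` Eint Om = Eint Om" using adj_sym by (auto simp: Eint_def image_iff)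
    have "(\<Sum>(x,y)\<in>Eint Om. w x * (a y - a x)) = (\<Sum>p\<in>prod.swap ` Eint Om. (case p of (x,y) \<Rightarrow> w x * (a y - a x)))"
      using sw by simp
    also have "\<dots> = (\<Sum>(x,y)\<in>Eint Om. w y * (a x - a y))"
      by (subst sum.reindex) (auto simp: case_prod_unfold)
    finally have "2 * (\<Sum>(x,y)\<in>Eint Om. w x * (a y - a x)) = (\<Sum>(x,y)\<in>Eint Om. w x * (a y - a x)) + (\<Sum>(x,y)\<in>Eint Om. w y * (a x - a y))"
      by simp
    also have "\<dots> = - (\<Sum>(x,y)\<in>Eint Om. (a y - a x) * (w y - w x))"
      by (simp add: sum.distrib[symmetric] sum_negf[symmetric] case_prod_unfold algebra_simps)
    finally show ?thesis by simp
  qed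
  finally show ?thesis unfolding Dbil_def by simp
qed

lemma step:
  assumes fin: "finite Om" and a0: "\<forall>y\<in>lat_bdry Om. a y = 0" and b0: "\<forall>y\<in>lat_bdry Om. b y = 0"
    and an: "\<forall>x\<in>Om. a x \<le> 0" and bn: "\<forall>x\<in>Om. b x \<le> 0"
    and lam: "lam > 0" and K: "K > 2 * lam"
    and eq: "\<forall>x\<in>Om. lat_laplacian a x - K * a x = lam * exp (b x) * (exp (b x) - 1) + g x - K * b x"
  shows "energy_F lam g Om a \<le> energy_F lam g Om b"
proof -
  define w where "w x = a x - b x" for x
  have w0: "\<forall>y\<in>lat_bdry Om. w y = 0" using a0 b0 by (simp add: w_def)
  have S: "(\<Sum>x\<in>Om. w x * lat_laplacian a x) = - Dbil Om a w" by (rule sbp[OF fin w0])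
  have lap: "lat_laplacian a x = K * w x + lam * exp (b x) * (exp (b x) - 1) + g x" if "x \<in> Om" for x
    using eq that by (simp add: w_def algebra_simps)
  have "energy_F lam g Om a - energy_F lam g Om b
      = (1/2) * (2 * Dbil Om a w - Dbil Om w w)
        + (\<Sum>x\<in>Om. (lam/2 * (exp (a x) - 1)^2 + g x * a x) - (lam/2 * (exp (b x) - 1)^2 + g x * b x))"
    unfolding energy_F_def D_Dbil using Dbil_diff[of Om a b]
    by (simp add: w_def[abs_def] sum_subtractf algebra_simps)
  also have "\<dots> = - (1/2) * Dbil Om w w + (\<Sum>x\<in>Om. (lam/2 * (exp (a x) - 1)^2 - lam/2 * (exp (b x) - 1)^2
       - lam * exp (b x) * (exp (b x) - 1) * w x - K * w x ^ 2))"
  proof -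
    have "(\<Sum>x\<in>Om. (lam/2 * (exp (a x) - 1)^2 + g x * a x) - (lam/2 * (exp (b x) - 1)^2 + g x * b x))
      = (\<Sum>x\<in>Om. w x * lat_laplacian a x) + (\<Sum>x\<in>Om. (lam/2 * (exp (a x) - 1)^2 - lam/2 * (exp (b x) - 1)^2
       - lam * exp (b x) * (exp (b x) - 1) * w x - K * w x ^ 2))"
      by (simp add: sum.distrib[symmetric] lap w_def power2_eq_square algebra_simps cong: sum.cong)
    then show ?thesis using S by (simp add: field_simps)
  qed
  also have "\<dots> \<le> 0"
  proof -
    have "(lam/2 * (exp (a x) - 1)^2 - lam/2 * (exp (b x) - 1)^2
       - lam * exp (b x) * (exp (b x) - 1) * w x - K * w x ^ 2) \<le> 0" if x: "x \<in> Om" for x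
    proof -
      have t: "(exp (a x) - 1)^2/2 - (exp (b x) - 1)^2/2 - exp (b x) * (exp (b x) - 1) * (a x - b x) \<le> (a x - b x)^2/2"
        using taylor_q an bn x by blast
      have "lam * ((exp (a x) - 1)^2/2 - (exp (b x) - 1)^2/2 - exp (b x) * (exp (b x) - 1) * (a x - b x)) \<le> lam * ((a x - b x)^2/2)"
        using mult_left_mono[OF t] lam by simp
      moreover have "lam * ((a x - b x)^2/2) \<le> K * (a x - b x)^2"
      proof -
        have "lam / 2 \<le> K" using lam K by simp
        then have "lam / 2 * (a x - b x)^2 \<le> K * (a x - b x)^2" by (intro mult_right_mono) auto
        then show ?thesis by simp
      qed
      ultimately show ?thesis unfolding w_def by (simp add: algebra_simps)
    qed
    then have "(\<Sum>x\<in>Om. (lam/2 * (exp (a x) - 1)^2 - lam/2 * (exp (b x) - 1)^2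
       - lam * exp (b x) * (exp (b x) - 1) * w x - K * w x ^ 2)) \<le> 0" by (rule sum_nonpos)
    moreover have "Dbil Om w w \<ge> 0" by (rule Dbil_nonneg)
    ultimately show ?thesis by simp
  qed
  finally show ?thesis by simp
qed

lemma maxp:
  assumes fin: "finite Om" and a0: "\<forall>y\<in>lat_bdry Om. a y = 0" and K: "K > 0"
    and ge: "\<forall>x\<in>Om. lat_laplacian a x - K * a x \<ge> 0"
  shows "\<forall>x\<in>Om. a x \<le> 0"
proof (rule ccontr)
  assume "\<not> ?thesis"
  then obtain x0 where x0: "x0 \<in> Om" "a x0 > 0" by auto
  define m where "m = Max (a ` Om)"
  have "m \<in> a ` Om" unfolding m_def using fin x0 by (intro Max_in) auto
  then obtain x where x: "x \<in> Om" "a x = m" by auto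
  have mx: "\<forall>y\<in>Om. a y \<le> m" unfolding m_def using fin by auto
  have pos: "a x > 0" using x mx x0 by force
  have "lat_laplacian a x \<le> 0" unfolding lat_laplacian_def
  proof (rule sum_nonpos)
    fix y assume "y \<in> {y. lat_adj x y}"
    then have adj: "lat_adj y x" using adj_sym by auto
    show "a y - a x \<le> 0"
    proof (cases "y \<in> Om")
      case True then show ?thesis using mx x by auto
    next
      case False then have "y \<in> lat_bdry Om" using adj x by (auto simp: lat_bdry_def)
      then show ?thesis using a0 pos by auto
    qed
  qed
  then have "lat_laplacian a x - K * a x < 0" proof -
    have "K * a x > 0" using K pos by simp
    then show ?thesis using \<open>lat_laplacian a x \<le> 0\<close> by linarith
  qed
  then show False using ge x by auto
qed

lemma rhs_nonneg:
  assumes "b \<le> (0::real)" "lam > 0" "K > 2 * lam" "gx \<ge> 0"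
  shows "lam * exp b * (exp b - 1) + gx - K * b \<ge> 0"
proof -
  have "exp b * (exp b - 1) - (exp b - 1) = (exp b - 1)^2" by (simp add: power2_eq_square algebra_simps)
  then have "exp b * (exp b - 1) \<ge> b" using exp_ge_add_one_self[of b] zero_le_power2[of "exp b - 1"] by linarith
  then have "lam * (exp b * (exp b - 1)) \<ge> lam * b" using assms(2) by simp
  moreover have "lam * b \<ge> K * b" using assms by (intro mult_right_mono_neg) auto
  ultimately show ?thesis using assms(4) by (simp add: algebra_simps)
qed


theorem lemma3p5:
  shows "\<exists>c0 :: nat \<Rightarrow> real \<Rightarrow> real \<Rightarrow> real.
    \<forall>(n::nat) (lam::real) (M::nat) (p::nat \<Rightarrow> int list) (nn::nat \<Rightarrow> nat)
      (\<Omega>0::int list set) (\<Omega>::int list set) (K::real) (u::nat \<Rightarrow> int list \<Rightarrow> real).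
      n \<ge> 2 \<and> lam > 0
      \<and> (\<forall>j<M. length (p j) = n) \<and> inj_on p {..<M} \<and> (\<forall>j<M. nn j > 0)
      \<and> finite \<Omega>0 \<and> p ` {..<M} \<subseteq> \<Omega>0
      \<and> finite \<Omega> \<and> \<Omega> \<subseteq> {x. length x = n} \<and> lat_connected \<Omega> \<and> \<Omega>0 \<subseteq> \<Omega>
      \<and> K > 2 * lam
      \<and> (\<forall>x. u 0 x = 0)
      \<and> (\<forall>k\<ge>1. (\<forall>x\<in>\<Omega>. lat_laplacian (u k) x - K * u k x
                  = lam * exp (u (k-1) x) * (exp (u (k-1) x) - 1) + vortex_src M p nn x
                    - K * u (k-1) x)
               \<and> (\<forall>x\<in>lat_bdry \<Omega>. u k x = 0))
      \<longrightarrow> (let g = vortex_src M p nn; C = 4 * pi * (\<Sum>j<M. real (nn j)) in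
           energy_F lam g \<Omega> (u 1) \<le> c0 n C lam
           \<and> (\<forall>k\<ge>1. energy_F lam g \<Omega> (u (Suc k)) \<le> energy_F lam g \<Omega> (u k)))"
proof (rule exI[of _ "\<lambda>_ _ _. 0"], intro allI impI)
  fix n :: nat and lam :: real and M :: nat and p :: "nat \<Rightarrow> int list" and nn :: "nat \<Rightarrow> nat"
    and \<Omega>0 \<Omega> :: "int list set" and K :: real and u :: "nat \<Rightarrow> int list \<Rightarrow> real"
  assume H: "n \<ge> 2 \<and> lam > 0
      \<and> (\<forall>j<M. length (p j) = n) \<and> inj_on p {..<M} \<and> (\<forall>j<M. nn j > 0)
      \<and> finite \<Omega>0 \<and> p ` {..<M} \<subseteq> \<Omega>0
      \<and> finite \<Omega> \<and> \<Omega> \<subseteq> {x. length x = n} \<and> lat_connected \<Omega> \<and> \<Omega>0 \<subseteq> \<Omega>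
      \<and> K > 2 * lam
      \<and> (\<forall>x. u 0 x = 0)
      \<and> (\<forall>k\<ge>1. (\<forall>x\<in>\<Omega>. lat_laplacian (u k) x - K * u k x
                  = lam * exp (u (k-1) x) * (exp (u (k-1) x) - 1) + vortex_src M p nn x
                    - K * u (k-1) x)
               \<and> (\<forall>x\<in>lat_bdry \<Omega>. u k x = 0))"
  define g where "g = vortex_src M p nn"
  have lam: "lam > 0" and K: "K > 2 * lam" and fin: "finite \<Omega>" and u0: "\<forall>x. u 0 x = 0" 
    and HK: "\<forall>k\<ge>1. (\<forall>x\<in>\<Omega>. lat_laplacian (u k) x - K * u k x
                  = lam * exp (u (k-1) x) * (exp (u (k-1) x) - 1) + vortex_src M p nn x
                    - K * u (k-1) x)
               \<and> (\<forall>x\<in>lat_bdry \<Omega>. u k x = 0)" using H by blast+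
  have eqk: "\<forall>x\<in>\<Omega>. lat_laplacian (u (Suc k)) x - K * u (Suc k) x
                  = lam * exp (u k x) * (exp (u k x) - 1) + g x - K * u k x" for k
    using HK[rule_format, of "Suc k"] unfolding g_def by simp
  have bd: "\<forall>x\<in>lat_bdry \<Omega>. u k x = 0" for k
  proof (cases k)
    case 0 then show ?thesis using u0 by simp
  next
    case (Suc m) then show ?thesis using HK[rule_format, of "Suc m"] by simp
  qed
  have gnn: "g x \<ge> 0" for x unfolding g_def vortex_src_def by (intro mult_nonneg_nonneg sum_nonneg) auto
  have neg: "\<forall>x\<in>\<Omega>. u k x \<le> 0" for k
  proof (induction k)
    case 0 then show ?case using u0 by simp
  next
    case (Suc k)
    show ?case
    proof (rule maxp[OF fin bd])
      show "K > 0" using lam K by simp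
      show "\<forall>x\<in>\<Omega>. lat_laplacian (u (Suc k)) x - K * u (Suc k) x \<ge> 0"
        using eqk[of k] Suc.IH rhs_nonneg[OF _ lam K gnn] by auto
    qed
  qed
  have mono: "energy_F lam g \<Omega> (u (Suc k)) \<le> energy_F lam g \<Omega> (u k)" for k
    by (rule step[OF fin bd bd neg neg lam K eqk])
  have "u 0 = (\<lambda>x. 0)" using u0 by auto
  then have F0: "energy_F lam g \<Omega> (u 0) = 0"
    unfolding energy_F_def dirichlet_energy_def by simp
  show "let g = vortex_src M p nn; C = 4 * pi * (\<Sum>j<M. real (nn j)) in
           energy_F lam g \<Omega> (u 1) \<le> (\<lambda>_ _ _. 0) n C lam
           \<and> (\<forall>k\<ge>1. energy_F lam g \<Omega> (u (Suc k)) \<le> energy_F lam g \<Omega> (u k))"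
    unfolding Let_def g_def[symmetric] using mono[of 0] F0 mono by simp
qed

end
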